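(* For $n\ge 1$ let $A_n(x)=\sum_{\pi\in S_n}x^{\mathrm{des}(\pi)}$ be the Eulerian polynomial, and let $$C_n(x)=\sum_{\omega\in C_n}x^{\mathrm{des}(\omega)},\qquad \widetilde C_n(x)=\sum_{\omega\in C_n}x^{\mathrm{ades}(\omega)},\qquad T_n(x)=C_n(x^2)+\frac1x\,\widetilde C_n(x^2).$$ Then for every $n\ge1$, $$T_n(x)=(1+x)^{n+1}A_n(x).$$
   Context: $S_n$ is the symmetric group on $[n]$; for $\pi\in S_n$, $\mathrm{des}(\pi)=|\{i\in[n-1]:\pi(i)>\pi(i+1)\}|$. $C_n$ denotes the set of signed permutations of $\pm[n]=\{\pm1,\dots,\pm n\}$, i.e. bijections $\omega$ of $\pm[n]$ with $\omega(-i)=-\omega(i)$ for all $i$; such $\omega$ is recorded by $(\omega(1),\dots,\omega(n))$. Setting $\omega(0)=\omega(n+1)=0$, define $\mathrm{des}(\omega)=|\{i\in\{0,1,\dots,n-1\}:\omega(i)>\omega(i+1)\}|$ and $\mathrm{ades}(\omega)=|\{i\in\{0,1,\dots,n\}:\omega(i)>\omega(i+1)\}|$. *)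

theory Defs
  imports "HOL-Combinatorics.Combinatorics" Complex_Main
begin

definition des :: "nat \<Rightarrow> (nat \<Rightarrow> nat) \<Rightarrow> nat" where
  "des n p = card {i \<in> {1..n-1}. p i > p (Suc i)}"

definition signed_perms :: "nat \<Rightarrow> (int \<Rightarrow> int) set" where
  "signed_perms n = {w. w permutes ({-int n..int n} - {0}) \<and> (\<forall>i. w (-i) = - w i)}"

definition sval :: "nat \<Rightarrow> (int \<Rightarrow> int) \<Rightarrow> nat \<Rightarrow> int" where
  "sval n w i = (if 1 \<le> i \<and> i \<le> n then w (int i) else 0)"

definition sdes :: "nat \<Rightarrow> (int \<Rightarrow> int) \<Rightarrow> nat" where
  "sdes n w = card {i \<in> {0..n-1}. sval n w i > sval n w (Suc i)}"

definition sades :: "nat \<Rightarrow> (int \<Rightarrow> int) \<Rightarrow> nat" where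
  "sades n w = card {i \<in> {0..n}. sval n w i > sval n w (Suc i)}"

definition eulerA :: "nat \<Rightarrow> real \<Rightarrow> real" where
  "eulerA n x = (\<Sum>p | p permutes {1..n}. x ^ des n p)"

definition typeC :: "nat \<Rightarrow> real \<Rightarrow> real" where
  "typeC n x = (\<Sum>w\<in>signed_perms n. x ^ sdes n w)"

definition typeCt :: "nat \<Rightarrow> real \<Rightarrow> real" where
  "typeCt n x = (\<Sum>w\<in>signed_perms n. x ^ sades n w)"

definition Tpoly :: "nat \<Rightarrow> real \<Rightarrow> real" where
  "Tpoly n x = typeC n (x^2) + (1/x) * typeCt n (x^2)"

end

theory Submission
  imports Defs "HOL-Computational_Algebra.Polynomial_FPS"
begin



fun ldes :: "'a::linorder list \<Rightarrow> nat" where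
  "ldes (a # b # r) = (if b < a then 1 else 0) + ldes (b # r)"
| "ldes _ = 0"

definition ins :: "nat \<Rightarrow> 'a \<Rightarrow> 'a list \<Rightarrow> 'a list" where
  "ins j z l = take j l @ z # drop j l"

lemma ldes_le: "ldes l \<le> length l - 1"
  by (induction l rule: ldes.induct) auto

lemma ldes_front: "ldes (z # l) = ldes l + (if l \<noteq> [] \<and> hd l < z then 1 else 0)"
  by (cases l) auto

lemma ldes_end: "l \<noteq> [] \<Longrightarrow> ldes (l @ [z]) = ldes l + (if z < last l then 1 else 0)"
  by (induction l rule: ldes.induct) auto

lemma ldes_mid:
  assumes "0 < j" "j < length l" "(\<forall>y\<in>set l. y < z) \<or> (\<forall>y\<in>set l. z < y)"
  shows "ldes (ins j z l) = ldes l + (if l!j < l!(j-1) then 0 else 1)"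
  using assms
proof (induction l arbitrary: j rule: ldes.induct)
  case (1 a b r)
  show ?case
  proof (cases "j = 1")
    case True
    then show ?thesis using 1(4) by (auto simp: ins_def)
  next
    case False
    then obtain j' where j': "j = Suc j'" "0 < j'" using 1(2) by (cases j) auto
    have IH: "ldes (ins j' z (b # r)) = ldes (b # r) + (if (b#r)!j' < (b#r)!(j'-1) then 0 else 1)"
      using 1 j' by auto
    have "ins j z (a # b # r) = a # ins j' z (b # r)" using j' by (simp add: ins_def)
    moreover have "ins j' z (b # r) = b # ins (j'-1) z r" using j' by (cases j') (auto simp: ins_def)
    ultimately show ?thesis using IH j' by (cases j') auto
  qed
qed auto

lemma ldes_count: "(\<Sum>j\<in>{1..<length l}. (if l!j < l!(j-1) then 1 else 0::nat)) = ldes l"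
proof (induction l rule: ldes.induct)
  case (1 a b r)
  have "{1..<length (a#b#r)} = insert 1 {2..<length (a#b#r)}" by auto
  hence "(\<Sum>j\<in>{1..<length (a#b#r)}. (if (a#b#r)!j < (a#b#r)!(j-1) then 1 else 0::nat))
      = (if b < a then 1 else 0) + (\<Sum>j\<in>{2..<length (a#b#r)}. (if (a#b#r)!j < (a#b#r)!(j-1) then 1 else 0::nat))"
    by simp
  also have "(\<Sum>j\<in>{2..<length (a#b#r)}. (if (a#b#r)!j < (a#b#r)!(j-1) then 1 else 0::nat))
      = (\<Sum>j\<in>{1..<length (b#r)}. (if (b#r)!j < (b#r)!(j-1) then 1 else 0::nat))"
    by (rule sum.reindex_bij_witness[of _ Suc "\<lambda>j. j - 1"]) auto
  finally show ?case using 1 by simp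
qed auto


definition wb :: "nat \<Rightarrow> nat \<Rightarrow> nat \<Rightarrow> nat" where
  "wb n k d = (if d \<le> k then (k - d + n) choose n else 0)"

lemma binom_absorb': "K \<ge> n \<Longrightarrow> Suc n * (K choose Suc n) = (K - n) * (K choose n)"
proof -
  assume "K \<ge> n"
  show ?thesis
  proof (cases "K = n")
    case True thus ?thesis by simp
  next
    case False
    then obtain b where b: "K = Suc (n + b)" using \<open>K \<ge> n\<close> by (intro that[of "K - n - 1"]) simp
    show ?thesis using Suc_times_binomial_add[of n b] b by simp
  qed
qed

lemma wb_step:
  assumes "a + b = s * Suc n" and "d \<le> k \<Longrightarrow> c + s*d = s*k + a"
  shows "a * wb (Suc n) k d + b * wb (Suc n) k (Suc d) = c * wb n k d"
proof (cases "d \<le> k")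
  case False thus ?thesis by (simp add: wb_def)
next
  case True
  note c = assms(2)[OF True]
  show ?thesis
  proof (cases "d = k")
    case True thus ?thesis using c by (simp add: wb_def)
  next
    case False
    define K where "K = k - d + n"
    have e1: "wb (Suc n) k d = (K choose n) + (K choose Suc n)"
      using \<open>d \<le> k\<close> by (simp add: wb_def K_def)
    have e2: "wb (Suc n) k (Suc d) = K choose Suc n"
      using \<open>d \<le> k\<close> False by (simp add: wb_def K_def Suc_diff_Suc)
    have e3: "wb n k d = K choose n" using \<open>d \<le> k\<close> by (simp add: wb_def K_def)
    have abs: "Suc n * (K choose Suc n) = (k - d) * (K choose n)"
      using binom_absorb'[of n K] by (simp add: K_def)
    have "a * wb (Suc n) k d + b * wb (Suc n) k (Suc d) = (a + b) * (K choose Suc n) + a * (K choose n)"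
      by (simp add: e1 e2 algebra_simps)
    also have "\<dots> = s * (Suc n * (K choose Suc n)) + a * (K choose n)" using assms(1) by (simp add: algebra_simps)
    also have "\<dots> = (s * (k - d) + a) * (K choose n)" by (simp only: abs) (simp add: distrib_right mult.assoc)
    also have "s * (k - d) + a = c" using c \<open>d \<le> k\<close> by (simp add: diff_mult_distrib2)
    finally show ?thesis by (simp add: e3)
  qed
qed

lemma ins_surj:
  assumes "\<exists>y\<in>set xs. P y"
  shows "\<exists>j l. xs = ins j (xs ! j) l \<and> P (xs ! j) \<and> l = take j xs @ drop (Suc j) xs \<and> j < length xs
     \<and> (\<forall>y\<in>set (take j xs). \<not> P y)"
proof -
  define j where "j = length (takeWhile (\<lambda>y. \<not> P y) xs)"
  have jl: "j < length xs"
  proof (rule ccontr)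
    assume "\<not> j < length xs"
    hence "length (takeWhile (\<lambda>y. \<not> P y) xs) = length xs" unfolding j_def
      using length_takeWhile_le[of "\<lambda>y. \<not> P y" xs] by simp
    hence tw: "takeWhile (\<lambda>y. \<not> P y) xs = xs"
      using takeWhile_eq_take[of "\<lambda>y. \<not> P y" xs] by (metis take_all order_refl)
    obtain y where y: "y \<in> set xs" "P y" using assms by blast
    have "y \<in> set (takeWhile (\<lambda>y. \<not> P y) xs)" unfolding tw by (rule y(1))
    thus False using y(2) by (blast dest: set_takeWhileD)
  qed
  have Pj: "P (xs ! j)" using assms using nth_length_takeWhile[of "\<lambda>y. \<not> P y" xs] jl unfolding j_def by simp
  have tk: "take j xs = takeWhile (\<lambda>y. \<not> P y) xs" unfolding j_def by (rule takeWhile_eq_take[symmetric])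
  have "xs = ins j (xs ! j) (take j xs @ drop (Suc j) xs)"
  proof -
    have lt: "length (take j xs) = j" using jl by simp
    have e: "ins j (xs ! j) (take j xs @ drop (Suc j) xs) = take j xs @ xs ! j # drop (Suc j) xs"
      unfolding ins_def using lt by simp
    show ?thesis by (rule trans[OF id_take_nth_drop[OF jl] e[symmetric]])
  qed
  moreover have "\<forall>y\<in>set (take j xs). \<not> P y" unfolding tk by (auto dest: set_takeWhileD)
  ultimately show ?thesis using jl Pj
    by (intro exI[of _ j] exI[of _ "take j xs @ drop (Suc j) xs"]) simp
qed

lemma set_ins[simp]: "set (ins j z l) = insert z (set l)"
proof -
  have "set (take j l) \<union> set (drop j l) = set l" by (metis append_take_drop_id set_append)
  thus ?thesis by (auto simp: ins_def)
qed

lemma length_ins[simp]: "j \<le> length l \<Longrightarrow> length (ins j z l) = Suc (length l)"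
  unfolding ins_def by simp

lemma mset_ins: "mset (ins k z l) = add_mset z (mset l)"
proof -
  have "mset l = mset (take k l) + mset (drop k l)" by (metis append_take_drop_id mset_append)
  thus ?thesis by (simp add: ins_def)
qed

lemma distinct_ins: "distinct (ins k z l) \<longleftrightarrow> distinct (z # l)"
  by (rule mset_eq_imp_distinct_iff) (simp add: mset_ins)

lemma map_ins: "map f (ins k z l) = ins k (f z) (map f l)"
  by (simp add: ins_def take_map drop_map)

definition sp :: "('a \<Rightarrow> bool) \<Rightarrow> 'a list \<Rightarrow> 'a list \<times> nat \<times> 'a" where
  "sp P xs = (let k = length (takeWhile (\<lambda>y. \<not> P y) xs) in (take k xs @ drop (Suc k) xs, k, xs ! k))"

lemma sp_ins:
  assumes "\<forall>y\<in>set l. \<not> P y" "P z" "k \<le> length l"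
  shows "sp P (ins k z l) = (l, k, z)"
proof -
  have tw: "takeWhile (\<lambda>y. \<not> P y) (ins k z l) = take k l"
  proof -
    have "\<forall>y\<in>set (take k l). \<not> P y" using assms(1) by (meson in_set_takeD)
    thus ?thesis unfolding ins_def using assms(2) by (simp add: takeWhile_append2)
  qed
  have lk: "length (take k l) = k" using assms(3) by simp
  show ?thesis unfolding sp_def Let_def tw lk using assms(3)
    by (simp add: ins_def nth_append min_def)
qed

lemma ins_sp:
  assumes "\<exists>y\<in>set xs. P y" "sp P xs = (l, k, z)"
  shows "xs = ins k z l \<and> P z \<and> k \<le> length l \<and> mset xs = add_mset z (mset l)"
proof -
  obtain j l' where j: "xs = ins j (xs ! j) l'" "P (xs ! j)" "l' = take j xs @ drop (Suc j) xs"
    "j < length xs" "\<forall>y\<in>set (take j xs). \<not> P y"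
    using ins_surj[OF assms(1)] by blast
  have e: "xs = take j xs @ xs ! j # drop (Suc j) xs" by (rule id_take_nth_drop[OF j(4)])
  have "takeWhile (\<lambda>y. \<not> P y) xs = takeWhile (\<lambda>y. \<not> P y) (take j xs @ xs ! j # drop (Suc j) xs)"
    by (rule arg_cong[where f="takeWhile (\<lambda>y. \<not> P y)", OF e])
  also have "\<dots> = take j xs" using j(5) j(2) by (simp add: takeWhile_append2)
  finally have "takeWhile (\<lambda>y. \<not> P y) xs = take j xs" .
  hence "length (takeWhile (\<lambda>y. \<not> P y) xs) = j" using j(4) by simp
  hence "l = l'" "k = j" "z = xs ! j" using assms(2) j(3) unfolding sp_def Let_def by auto
  thus ?thesis using j mset_ins[of k z l] by auto
qed

definition PA :: "nat \<Rightarrow> nat list set" where "PA n = permutations_of_set {1..n}"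

lemma PA_sum:
  "(\<Sum>xs\<in>PA (Suc n). g xs) = (\<Sum>l\<in>PA n. \<Sum>k\<le>n. g (ins k (Suc n) l))"
proof -
  let ?P = "\<lambda>y. y = Suc n"
  let ?T = "Sigma (PA n) (\<lambda>_. {..n})"
  have "(\<Sum>xs\<in>PA (Suc n). g xs) = (\<Sum>(l,k)\<in>?T. g (ins k (Suc n) l))"
  proof (rule sum.reindex_bij_witness[of _ "\<lambda>(l,k). ins k (Suc n) l" "\<lambda>xs. (fst (sp ?P xs), fst (snd (sp ?P xs)))"])
    fix a assume a: "a \<in> PA (Suc n)"
    obtain l k z where s: "sp ?P a = (l,k,z)" by (cases "sp ?P a") auto
    have ex: "\<exists>y\<in>set a. ?P y" using a by (auto simp: PA_def permutations_of_set_def)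
    note h = ins_sp[OF ex s]
    have da: "distinct a" "set a = {1..Suc n}" using a by (auto simp: PA_def permutations_of_set_def)
    have dl: "distinct (z # l)" using da(1) h distinct_ins[of k z l] by simp
    have sl: "set l = {1..n}"
    proof -
      have "set a = insert z (set l)" using h by simp
      moreover have "z \<notin> set l" using dl by simp
      ultimately have "set l = set a - {z}" by auto
      also have "\<dots> = {1..Suc n} - {Suc n}" using da(2) h by simp
      also have "\<dots> = {1..n}" by auto
      finally show ?thesis .
    qed
    have ln: "length l = n" using distinct_card[of l] dl sl by simp
    show "(case (fst (sp ?P a), fst (snd (sp ?P a))) of (l, k) \<Rightarrow> ins k (Suc n) l) = a"
      using s h by simp
    show "(fst (sp ?P a), fst (snd (sp ?P a))) \<in> ?T"
      using s h dl sl ln by (auto simp: PA_def permutations_of_set_def)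
    show "(case (fst (sp ?P a), fst (snd (sp ?P a))) of (l, k) \<Rightarrow> g (ins k (Suc n) l)) = g a"
      using s h by simp
  next
    fix b assume b: "b \<in> ?T"
    obtain l k where lk: "b = (l,k)" by (cases b)
    have l: "distinct l" "set l = {1..n}" "k \<le> n" using b lk by (auto simp: PA_def permutations_of_set_def)
    have ln: "length l = n" using distinct_card[of l] l by simp
    have "sp ?P (ins k (Suc n) l) = (l, k, Suc n)"
      by (rule sp_ins) (use l ln in auto)
    thus "(fst (sp ?P (case b of (l, k) \<Rightarrow> ins k (Suc n) l)), fst (snd (sp ?P (case b of (l, k) \<Rightarrow> ins k (Suc n) l)))) = b"
      using lk by simp
    show "(case b of (l, k) \<Rightarrow> ins k (Suc n) l) \<in> PA (Suc n)"
      using l lk by (auto simp: PA_def permutations_of_set_def distinct_ins)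
  qed
  also have "\<dots> = (\<Sum>l\<in>PA n. \<Sum>k\<le>n. g (ins k (Suc n) l))"
    by (rule sum.Sigma[symmetric]) (auto simp: PA_def)
  finally show ?thesis .
qed

lemma sum_if_split:
  fixes A B :: nat
  assumes "finite I"
  shows "(\<Sum>k\<in>I. if c k then A else B) = A * (\<Sum>k\<in>I. if c k then 1 else 0) + B * (card I - (\<Sum>k\<in>I. if c k then 1 else 0))"
proof -
  have "(\<Sum>k\<in>I. (if c k then 1 else 0::nat) + (if c k then 0 else 1)) = (\<Sum>k\<in>I. 1)"
    by (rule sum.cong) auto
  hence c: "(\<Sum>k\<in>I. if c k then 1 else 0::nat) + (\<Sum>k\<in>I. if c k then 0 else 1) = card I"
    by (simp only: sum.distrib card_eq_sum)
  have "(\<Sum>k\<in>I. if c k then A else B) = (\<Sum>k\<in>I. A * (if c k then 1 else 0) + B * (if c k then 0 else 1))"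
    by (rule sum.cong) auto
  also have "\<dots> = A * (\<Sum>k\<in>I. if c k then 1 else 0) + B * (\<Sum>k\<in>I. if c k then 0 else 1)"
    by (simp only: sum.distrib sum_distrib_left)
  finally show ?thesis using c by (metis add_diff_cancel_left')
qed

lemma mid_sum:
  assumes "(\<forall>y\<in>set L. y < z) \<or> (\<forall>y\<in>set L. z < y)"
  shows "(\<Sum>k\<in>{1..<length L}. f (ldes (ins k z L))) = ldes L * f (ldes L) + (length L - 1 - ldes L) * f (Suc (ldes L))"
proof -
  have "(\<Sum>k\<in>{1..<length L}. f (ldes (ins k z L))) = (\<Sum>k\<in>{1..<length L}. if L!k < L!(k-1) then f (ldes L) else f (Suc (ldes L)))"
    by (rule sum.cong) (use ldes_mid[OF _ _ assms] in auto)
  also have "\<dots> = f (ldes L) * (\<Sum>k\<in>{1..<length L}. if L!k < L!(k-1) then 1 else 0)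
     + f (Suc (ldes L)) * (card {1..<length L} - (\<Sum>k\<in>{1..<length L}. if L!k < L!(k-1) then 1 else 0))"
    by (rule sum_if_split) simp
  also have "\<dots> = f (ldes L) * ldes L + f (Suc (ldes L)) * (card {1..<length L} - ldes L)"
    by (simp only: ldes_count)
  finally show ?thesis by simp
qed

lemma typeA_inner:
  assumes "length l = n" "\<forall>y\<in>set l. y < z"
  shows "(\<Sum>k\<le>n. f (ldes (ins k z l))) = Suc (ldes l) * f (ldes l) + (n - ldes l) * f (Suc (ldes l))"
proof (cases "n = 0")
  case True thus ?thesis using assms by (simp add: ins_def)
next
  case False
  have split: "{..n} = insert 0 (insert n {1..<n})" using False by auto
  have "(\<Sum>k\<le>n. f (ldes (ins k z l))) = f (ldes (ins 0 z l)) + f (ldes (ins n z l)) + (\<Sum>k\<in>{1..<n}. f (ldes (ins k z l)))"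
    unfolding split using False by simp
  also have "ldes (ins 0 z l) = Suc (ldes l)"
    using False assms by (simp add: ins_def ldes_front) (cases l, auto)
  also have "ldes (ins n z l) = ldes l"
  proof -
    have "ins n z l = l @ [z]" using assms by (simp add: ins_def)
    moreover have "\<not> z < last l" using assms False by (metis last_in_set list.size(3) not_less_iff_gr_or_eq)
    moreover have "l \<noteq> []" using False assms(1) by auto
    ultimately show ?thesis by (simp add: ldes_end)
  qed
  also have "(\<Sum>k\<in>{1..<n}. f (ldes (ins k z l))) = ldes l * f (ldes l) + (n - 1 - ldes l) * f (Suc (ldes l))"
    using mid_sum[of l z f] assms by simp
  finally have eq: "(\<Sum>k\<le>n. f (ldes (ins k z l))) = f (Suc (ldes l)) + f (ldes l) + (ldes l * f (ldes l) + (n - 1 - ldes l) * f (Suc (ldes l)))" .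
  have "n - ldes l = Suc (n - 1 - ldes l)" using ldes_le[of l] assms False by arith
  thus ?thesis unfolding eq by simp
qed

lemma WA: "(\<Sum>l\<in>PA n. wb n m (ldes l)) = (m+1)^n"
proof (induction n)
  case 0 thus ?case by (simp add: PA_def wb_def)
next
  case (Suc n)
  have "(\<Sum>l\<in>PA (Suc n). wb (Suc n) m (ldes l)) = (\<Sum>l\<in>PA n. \<Sum>k\<le>n. wb (Suc n) m (ldes (ins k (Suc n) l)))"
    by (rule PA_sum)
  also have "\<dots> = (\<Sum>l\<in>PA n. (m+1) * wb n m (ldes l))"
  proof (rule sum.cong[OF refl])
    fix l assume l: "l \<in> PA n"
    have ln: "length l = n" "\<forall>y\<in>set l. y < Suc n" using l by (auto simp: PA_def permutations_of_set_def length_finite_permutations_of_set)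
    have "ldes l \<le> n" using ldes_le[of l] ln by simp
    show "(\<Sum>k\<le>n. wb (Suc n) m (ldes (ins k (Suc n) l))) = (m+1) * wb n m (ldes l)"
      by (subst typeA_inner[OF ln]) (rule wb_step[where s=1], use \<open>ldes l \<le> n\<close> in auto)
  qed
  also have "\<dots> = (m+1)^Suc n" by (simp only: sum_distrib_left[symmetric] Suc.IH) simp
  finally show ?case .
qed

definition SC :: "nat \<Rightarrow> int list set" where
  "SC n = {l. distinct (map abs l) \<and> abs ` set l = {1..int n}}"

lemma SC_length: "l \<in> SC n \<Longrightarrow> length l = n"
proof -
  assume "l \<in> SC n"
  hence "distinct (map abs l)" "set (map abs l) = {1..int n}" by (auto simp: SC_def)
  hence "length (map abs l) = card {1..int n}" by (metis distinct_card)
  thus ?thesis by simp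
qed

lemma SC_bound: "l \<in> SC n \<Longrightarrow> y \<in> set l \<Longrightarrow> abs y \<le> int n"
  by (auto simp: SC_def)

lemma SC_0: "SC 0 = {[]}"
  by (auto simp: SC_def)

lemma finite_SC: "finite (SC n)"
proof -
  have "SC n \<subseteq> {l. set l \<subseteq> {-int n..int n} \<and> length l = n}"
    using SC_length SC_bound by fastforce
  moreover have "finite {l. set l \<subseteq> {-int n..int n} \<and> length l = n}"
    by (rule finite_lists_length_eq) simp
  ultimately show ?thesis by (rule finite_subset)
qed

lemma SC_sum:
  "(\<Sum>xs\<in>SC (Suc n). g xs) = (\<Sum>l\<in>SC n. \<Sum>k\<le>n. g (ins k (int (Suc n)) l) + g (ins k (- int (Suc n)) l))"
proof -
  define N where "N = int (Suc n)"
  let ?P = "\<lambda>y::int. abs y = N"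
  let ?T = "Sigma (SC n) (\<lambda>_. {..n} \<times> {N, -N})"
  have "(\<Sum>xs\<in>SC (Suc n). g xs) = (\<Sum>(l,k,z)\<in>?T. g (ins k z l))"
  proof (rule sum.reindex_bij_witness[of _ "\<lambda>(l,k,z). ins k z l" "sp ?P"])
    fix a assume a: "a \<in> SC (Suc n)"
    obtain l k z where s: "sp ?P a = (l,k,z)" by (cases "sp ?P a") auto
    have da: "distinct (map abs a)" "abs ` set a = {1..N}" using a by (auto simp: SC_def N_def)
    have ex: "\<exists>y\<in>set a. ?P y" using da(2) by (metis atLeastAtMost_iff image_iff N_def of_nat_0_less_iff zero_less_Suc order_refl int_one_le_iff_zero_less)
    note h = ins_sp[OF ex s]
    have ma: "map abs a = ins k (abs z) (map abs l)" using h map_ins[of abs k z l] by simp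
    have dl: "distinct (abs z # map abs l)" using da(1) ma distinct_ins[of k "abs z" "map abs l"] by simp
    have sl: "abs ` set l = {1..int n}"
    proof -
      have "abs ` set a = insert (abs z) (abs ` set l)" using h by simp
      moreover have "abs z \<notin> abs ` set l" using dl by simp
      ultimately have "abs ` set l = abs ` set a - {abs z}" by auto
      also have "\<dots> = {1..N} - {N}" using da(2) h by simp
      also have "\<dots> = {1..int n}" unfolding N_def by auto
      finally show ?thesis .
    qed
    have lSC: "l \<in> SC n" using dl sl by (simp add: SC_def)
    have kn: "k \<le> n" using h SC_length[OF lSC] by simp
    have zN: "z \<in> {N, -N}" using h by auto
    show "(case sp ?P a of (l, k, z) \<Rightarrow> ins k z l) = a" using s h by simp
    show "sp ?P a \<in> ?T" using s lSC kn zN by simp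
    show "(case sp ?P a of (l, k, z) \<Rightarrow> g (ins k z l)) = g a" using s h by simp
  next
    fix b assume b: "b \<in> ?T"
    obtain l k z where lkz: "b = (l,k,z)" by (cases b) auto
    have l: "l \<in> SC n" "k \<le> n" "z \<in> {N, -N}" using b lkz by auto
    have ln: "length l = n" using SC_length[OF l(1)] .
    have nP: "\<forall>y\<in>set l. \<not> ?P y" using SC_bound[OF l(1)] unfolding N_def by fastforce
    have Pz: "?P z" using l(3) unfolding N_def by auto
    have "sp ?P (ins k z l) = (l, k, z)"
      by (rule sp_ins) (use nP Pz l ln in auto)
    thus "sp ?P (case b of (l, k, z) \<Rightarrow> ins k z l) = b" using lkz by simp
    have "distinct (map abs (ins k z l))"
      unfolding map_ins distinct_ins using l(1) nP Pz by (auto simp: SC_def N_def)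
    moreover have "abs ` set (ins k z l) = {1..N}"
    proof -
      have "abs ` set (ins k z l) = insert N {1..int n}" using l(1) Pz by (simp add: SC_def)
      also have "\<dots> = {1..N}" unfolding N_def by auto
      finally show ?thesis .
    qed
    ultimately show "(case b of (l, k, z) \<Rightarrow> ins k z l) \<in> SC (Suc n)"
      using lkz by (simp add: SC_def N_def)
  qed
  also have "\<dots> = (\<Sum>l\<in>SC n. \<Sum>(k,z)\<in>{..n} \<times> {N, -N}. g (ins k z l))"
    by (subst sum.Sigma[symmetric]) (auto simp: finite_SC)
  also have "\<dots> = (\<Sum>l\<in>SC n. \<Sum>k\<le>n. g (ins k N l) + g (ins k (-N) l))"
  proof (rule sum.cong[OF refl])
    fix l
    have "N \<noteq> -N" unfolding N_def by simp
    thus "(\<Sum>(k,z)\<in>{..n} \<times> {N, -N}. g (ins k z l)) = (\<Sum>k\<le>n. g (ins k N l) + g (ins k (-N) l))"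
      by (subst sum.Sigma[symmetric]) auto
  qed
  finally show ?thesis unfolding N_def .
qed

lemma shift_sum: "(\<Sum>k\<le>n. h (Suc k)) = (\<Sum>j\<in>{1..<Suc (Suc n)}. (h j::nat))"
proof -
  have "(\<Sum>k\<le>n. h (Suc k)) = (\<Sum>k\<in>{0..<Suc n}. h (Suc k))" by (simp add: atLeast0LessThan lessThan_Suc_atMost)
  also have "\<dots> = (\<Sum>j\<in>{Suc 0..<Suc (Suc n)}. h j)" by (rule sum.shift_bounds_Suc_ivl[symmetric])
  finally show ?thesis by simp
qed

lemma extreme_C:
  assumes "l \<in> SC n" "z \<in> {int (Suc n), - int (Suc n)}"
  shows "(\<forall>y\<in>set (0 # l @ [0]). y < z) \<or> (\<forall>y\<in>set (0 # l @ [0]). z < y)"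
proof -
  have b: "\<forall>y\<in>set (0 # l @ [0]). abs y \<le> int n" using SC_bound[OF assms(1)] by auto
  have "z = int (Suc n) \<or> z = - int (Suc n)" using assms(2) by auto
  thus ?thesis
  proof
    assume "z = int (Suc n)"
    thus ?thesis using b by (intro disjI1 ballI) force
  next
    assume "z = - int (Suc n)"
    thus ?thesis using b by (intro disjI2 ballI) force
  qed
qed

lemma typeC_inner:
  assumes "l \<in> SC n" "z \<in> {int (Suc n), - int (Suc n)}"
  shows "(\<Sum>k\<le>n. f (ldes (0 # ins k z l))) = ldes (0#l) * f (ldes (0#l)) + (n - ldes (0#l)) * f (Suc (ldes (0#l)))
     + (if z < 0 then f (Suc (ldes (0#l))) else f (ldes (0#l)))"
proof -
  let ?L = "0 # l"
  have ln: "length l = n" by (rule SC_length[OF assms(1)])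
  have ext: "(\<forall>y\<in>set ?L. y < z) \<or> (\<forall>y\<in>set ?L. z < y)" using extreme_C[OF assms] by auto
  have "(\<Sum>k\<le>n. f (ldes (0 # ins k z l))) = (\<Sum>j\<in>{1..<Suc (Suc n)}. f (ldes (ins j z ?L)))"
    by (subst shift_sum[symmetric]) (simp add: ins_def)
  also have "\<dots> = (\<Sum>j\<in>{1..<length ?L}. f (ldes (ins j z ?L))) + f (ldes (ins (Suc n) z ?L))"
    using ln by simp
  also have "(\<Sum>j\<in>{1..<length ?L}. f (ldes (ins j z ?L))) = ldes ?L * f (ldes ?L) + (length ?L - 1 - ldes ?L) * f (Suc (ldes ?L))"
    by (rule mid_sum[OF ext])
  also have "ldes (ins (Suc n) z ?L) = ldes ?L + (if z < last ?L then 1 else 0)"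
    using ln by (simp add: ins_def ldes_end[of ?L z, simplified])
  also have "(z < last ?L) = (z < 0)"
  proof -
    have "last ?L \<in> set ?L" by simp
    hence "abs (last ?L) \<le> int n" using SC_bound[OF assms(1)] by (cases "last ?L = 0") auto
    thus ?thesis using assms(2) by auto
  qed
  finally show ?thesis using ln by simp
qed

lemma typeCt_inner:
  assumes "l \<in> SC n" "z \<in> {int (Suc n), - int (Suc n)}"
  shows "(\<Sum>k\<le>n. f (ldes (0 # ins k z l @ [0]))) = ldes (0#l@[0]) * f (ldes (0#l@[0])) + (Suc n - ldes (0#l@[0])) * f (Suc (ldes (0#l@[0])))"
proof -
  let ?L = "0 # l @ [0]"
  have ln: "length l = n" by (rule SC_length[OF assms(1)])
  have "(\<Sum>k\<le>n. f (ldes (0 # ins k z l @ [0]))) = (\<Sum>k\<le>n. f (ldes (ins (Suc k) z ?L)))"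
    by (rule sum.cong[OF refl]) (use ln in \<open>simp add: ins_def\<close>)
  also have "\<dots> = (\<Sum>j\<in>{1..<length ?L}. f (ldes (ins j z ?L)))"
    using shift_sum[of "\<lambda>j. f (ldes (ins j z ?L))" n] ln by simp
  also have "\<dots> = ldes ?L * f (ldes ?L) + (length ?L - 1 - ldes ?L) * f (Suc (ldes ?L))"
    by (rule mid_sum[OF extreme_C[OF assms]])
  finally show ?thesis using ln by simp
qed

lemma WC: "(\<Sum>l\<in>SC n. wb n m (ldes (0 # l))) = (2*m+1)^n"
proof (induction n)
  case 0 thus ?case by (simp add: SC_0 wb_def)
next
  case (Suc n)
  have "(\<Sum>l\<in>SC (Suc n). wb (Suc n) m (ldes (0 # l))) =
     (\<Sum>l\<in>SC n. \<Sum>k\<le>n. wb (Suc n) m (ldes (0 # ins k (int (Suc n)) l)) + wb (Suc n) m (ldes (0 # ins k (- int (Suc n)) l)))"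
    by (rule SC_sum)
  also have "\<dots> = (\<Sum>l\<in>SC n. (2*m+1) * wb n m (ldes (0 # l)))"
  proof (rule sum.cong[OF refl])
    fix l assume l: "l \<in> SC n"
    let ?d = "ldes (0 # l)"
    have dn: "?d \<le> n" using ldes_le[of "0#l"] SC_length[OF l] by simp
    have "(\<Sum>k\<le>n. wb (Suc n) m (ldes (0 # ins k (int (Suc n)) l)) + wb (Suc n) m (ldes (0 # ins k (- int (Suc n)) l)))
       = (\<Sum>k\<le>n. wb (Suc n) m (ldes (0 # ins k (int (Suc n)) l))) + (\<Sum>k\<le>n. wb (Suc n) m (ldes (0 # ins k (- int (Suc n)) l)))"
      by (rule sum.distrib)
    also have "\<dots> = (2 * ?d + 1) * wb (Suc n) m ?d + (2 * (n - ?d) + 1) * wb (Suc n) m (Suc ?d)"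
    proof -
      have i1: "(\<Sum>k\<le>n. wb (Suc n) m (ldes (0 # ins k (int (Suc n)) l))) = ?d * wb (Suc n) m ?d + (n - ?d) * wb (Suc n) m (Suc ?d) + wb (Suc n) m ?d"
        using typeC_inner[OF l, of "int (Suc n)" "wb (Suc n) m"] by simp
      have i2: "(\<Sum>k\<le>n. wb (Suc n) m (ldes (0 # ins k (- int (Suc n)) l))) = ?d * wb (Suc n) m ?d + (n - ?d) * wb (Suc n) m (Suc ?d) + wb (Suc n) m (Suc ?d)"
        using typeC_inner[OF l, of "- int (Suc n)" "wb (Suc n) m"] by simp
      show ?thesis unfolding i1 i2 by (simp add: algebra_simps)
    qed
    also have "\<dots> = (2*m+1) * wb n m ?d"
      by (rule wb_step[where s=2]) (use dn in auto)
    finally show "(\<Sum>k\<le>n. wb (Suc n) m (ldes (0 # ins k (int (Suc n)) l)) + wb (Suc n) m (ldes (0 # ins k (- int (Suc n)) l))) = (2*m+1) * wb n m ?d" .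
  qed
  also have "\<dots> = (2*m+1)^Suc n" by (simp only: sum_distrib_left[symmetric] Suc.IH) simp
  finally show ?case .
qed

lemma WCt: "(\<Sum>l\<in>SC n. wb n m (ldes (0 # l @ [0]))) = (2*m)^n"
proof (induction n)
  case 0 thus ?case by (simp add: SC_0 wb_def)
next
  case (Suc n)
  have "(\<Sum>l\<in>SC (Suc n). wb (Suc n) m (ldes (0 # l @ [0]))) =
     (\<Sum>l\<in>SC n. \<Sum>k\<le>n. wb (Suc n) m (ldes (0 # ins k (int (Suc n)) l @ [0])) + wb (Suc n) m (ldes (0 # ins k (- int (Suc n)) l @ [0])))"
    by (rule SC_sum)
  also have "\<dots> = (\<Sum>l\<in>SC n. (2*m) * wb n m (ldes (0 # l @ [0])))"
  proof (rule sum.cong[OF refl])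
    fix l assume l: "l \<in> SC n"
    let ?d = "ldes (0 # l @ [0])"
    have dn: "?d \<le> Suc n" using ldes_le[of "0#l@[0]"] SC_length[OF l] by simp
    have "(\<Sum>k\<le>n. wb (Suc n) m (ldes (0 # ins k (int (Suc n)) l @ [0])) + wb (Suc n) m (ldes (0 # ins k (- int (Suc n)) l @ [0])))
       = (\<Sum>k\<le>n. wb (Suc n) m (ldes (0 # ins k (int (Suc n)) l @ [0]))) + (\<Sum>k\<le>n. wb (Suc n) m (ldes (0 # ins k (- int (Suc n)) l @ [0])))"
      by (rule sum.distrib)
    also have "\<dots> = (2 * ?d) * wb (Suc n) m ?d + (2 * (Suc n - ?d)) * wb (Suc n) m (Suc ?d)"
    proof -
      have i1: "(\<Sum>k\<le>n. wb (Suc n) m (ldes (0 # ins k (int (Suc n)) l @ [0]))) = ?d * wb (Suc n) m ?d + (Suc n - ?d) * wb (Suc n) m (Suc ?d)"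
        using typeCt_inner[OF l, of "int (Suc n)" "wb (Suc n) m"] by simp
      have i2: "(\<Sum>k\<le>n. wb (Suc n) m (ldes (0 # ins k (- int (Suc n)) l @ [0]))) = ?d * wb (Suc n) m ?d + (Suc n - ?d) * wb (Suc n) m (Suc ?d)"
        using typeCt_inner[OF l, of "- int (Suc n)" "wb (Suc n) m"] by simp
      show ?thesis unfolding i1 i2 by (simp add: algebra_simps)
    qed
    also have "\<dots> = (2*m) * wb n m ?d"
      by (rule wb_step[where s=2]) (use dn in auto)
    finally show "(\<Sum>k\<le>n. wb (Suc n) m (ldes (0 # ins k (int (Suc n)) l @ [0])) + wb (Suc n) m (ldes (0 # ins k (- int (Suc n)) l @ [0]))) = (2*m) * wb n m ?d" .
  qed
  also have "\<dots> = (2*m)^Suc n" by (simp only: sum_distrib_left[symmetric] Suc.IH) simp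
  finally show ?case .
qed

lemma ldes_card: "ldes l = card {j\<in>{1..<length l}. l!j < l!(j-1)}"
proof -
  have "card {j\<in>{1..<length l}. l!j < l!(j-1)} = (\<Sum>j\<in>{j\<in>{1..<length l}. l!j < l!(j-1)}. 1)" by simp
  also have "\<dots> = (\<Sum>j\<in>{1..<length l}. if l!j < l!(j-1) then 1 else 0)" by (rule sum.inter_filter) simp
  finally show ?thesis using ldes_count[of l] by simp
qed

lemma eulerA_list: "eulerA n x = (\<Sum>l\<in>PA n. x ^ ldes l)"
proof -
  let ?phi = "\<lambda>p. map p [1..<Suc n]"
  have des_eq: "des n p = ldes (?phi p)" for p
  proof -
    have h: "j < n \<Longrightarrow> ?phi p ! j = p (Suc j)" for j by (simp del: upt_Suc)
    have "{i \<in> {1..n-1}. p (Suc i) < p i} = {j\<in>{1..<length (?phi p)}. (?phi p)!j < (?phi p)!(j-1)}"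
    proof (rule Collect_cong)
      fix j show "(j \<in> {1..n-1} \<and> p (Suc j) < p j) = (j \<in> {1..<length (?phi p)} \<and> ?phi p ! j < ?phi p ! (j - 1))"
        using h[of j] h[of "j-1"] by (cases "j \<in> {1..<n}") auto
    qed
    thus ?thesis by (simp add: des_def ldes_card)
  qed
  have bij: "bij_betw ?phi {p. p permutes {1..n}} (PA n)"
  proof (rule bij_betw_imageI)
    show "inj_on ?phi {p. p permutes {1..n}}"
    proof (rule inj_onI)
      fix p q assume p: "p \<in> {p. p permutes {1..n}}" and q: "q \<in> {p. p permutes {1..n}}" and e: "?phi p = ?phi q"
      show "p = q"
      proof
        fix i show "p i = q i"
        proof (cases "i \<in> {1..n}")
          case True
          hence "i \<in> set [1..<Suc n]" by auto
          thus ?thesis using e by (metis map_eq_conv)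
        next
          case False thus ?thesis using p q by (simp add: permutes_not_in)
        qed
      qed
    qed
    show "?phi ` {p. p permutes {1..n}} = PA n"
    proof
      show "?phi ` {p. p permutes {1..n}} \<subseteq> PA n"
      proof
        fix l assume "l \<in> ?phi ` {p. p permutes {1..n}}"
        then obtain p where p: "p permutes {1..n}" "l = ?phi p" by auto
        have "set l = p ` {1..n}" using p(2) by auto
        also have "\<dots> = {1..n}" by (rule permutes_image[OF p(1)])
        finally have "set l = {1..n}" .
        moreover have "distinct l" using p permutes_inj_on[OF p(1)]
          by (auto simp: distinct_map intro: inj_on_subset)
        ultimately show "l \<in> PA n" by (simp add: PA_def permutations_of_set_def)
      qed
    next
      show "PA n \<subseteq> ?phi ` {p. p permutes {1..n}}"
      proof
        fix l assume l: "l \<in> PA n"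
        have dl: "distinct l" "set l = {1..n}" using l by (auto simp: PA_def permutations_of_set_def)
        have ln: "length l = n" using distinct_card[OF dl(1)] dl(2) by simp
        define p where "p i = (if i \<in> {1..n} then l ! (i - 1) else i)" for i
        have inj: "inj_on p {1..n}"
        proof (rule inj_onI)
          fix i j assume i: "i \<in> {1..n}" and j: "j \<in> {1..n}" and e: "p i = p j"
          hence "l ! (i-1) = l ! (j-1)" by (simp add: p_def)
          hence "i - 1 = j - 1" using nth_eq_iff_index_eq[OF dl(1), of "i-1" "j-1"] ln i j by auto
          moreover have "1 \<le> i" "1 \<le> j" using i j by auto
          ultimately show "i = j" by arith
        qed
        have sub: "p ` {1..n} \<subseteq> {1..n}"
        proof
          fix y assume "y \<in> p ` {1..n}"
          then obtain i where i: "i \<in> {1..n}" "y = p i" by auto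
          hence "y = l ! (i-1)" by (simp add: p_def)
          moreover have "i - 1 < length l" using i ln by auto
          ultimately show "y \<in> {1..n}" using dl(2) nth_mem by blast
        qed
        have "p ` {1..n} = {1..n}" using endo_inj_surj[OF _ sub inj] by simp
        hence "bij_betw p {1..n} {1..n}" using inj by (simp add: bij_betw_def)
        moreover have "\<And>x. x \<notin> {1..n} \<Longrightarrow> p x = x" unfolding p_def by presburger
        ultimately have "p permutes {1..n}" by (rule bij_imp_permutes)
        moreover have "?phi p = l"
          by (rule nth_equalityI) (auto simp: ln p_def simp del: upt_Suc)
        ultimately show "l \<in> ?phi ` {p. p permutes {1..n}}" by force
      qed
    qed
  qed
  have "eulerA n x = (\<Sum>p\<in>{p. p permutes {1..n}}. x ^ ldes (?phi p))"
    by (simp add: eulerA_def des_eq)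
  also have "\<dots> = (\<Sum>l\<in>PA n. x ^ ldes l)"
    by (rule sum.reindex_bij_betw[OF bij])
  finally show ?thesis .
qed

lemma shift_card: "card {j\<in>{1..<Suc m}. P j} = card {i\<in>{0..<m}. P (Suc i)}"
proof -
  have "{j\<in>{1..<Suc m}. P j} = Suc ` {i\<in>{0..<m}. P (Suc i)}"
  proof
    show "{j\<in>{1..<Suc m}. P j} \<subseteq> Suc ` {i\<in>{0..<m}. P (Suc i)}"
    proof
      fix j assume j: "j \<in> {j\<in>{1..<Suc m}. P j}"
      hence "j = Suc (j - 1)" "j - 1 \<in> {i\<in>{0..<m}. P (Suc i)}" by auto
      thus "j \<in> Suc ` {i\<in>{0..<m}. P (Suc i)}" by (metis image_eqI)
    qed
  qed auto
  thus ?thesis by (simp add: card_image)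
qed

lemma sval_nth1: "i \<le> n \<Longrightarrow> (0 # map (\<lambda>i. w (int i)) [1..<Suc n]) ! i = sval n w i"
  by (cases i) (simp_all add: sval_def del: upt_Suc)

lemma sval_nth2: "i \<le> Suc n \<Longrightarrow> (0 # map (\<lambda>i. w (int i)) [1..<Suc n] @ [0]) ! i = sval n w i"
proof (cases "i = Suc n")
  case True thus ?thesis by (simp add: sval_def nth_append del: upt_Suc)
next
  case False
  assume "i \<le> Suc n"
  hence "i \<le> n" using False by simp
  thus ?thesis using sval_nth1[of i n w] by (cases i) (simp_all add: nth_append del: upt_Suc)
qed

lemma sdes_list: "n \<ge> 1 \<Longrightarrow> sdes n w = ldes (0 # map (\<lambda>i. w (int i)) [1..<Suc n])"
proof -
  assume n: "n \<ge> 1"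
  let ?L = "0 # map (\<lambda>i. w (int i)) [1..<Suc n]"
  have "ldes ?L = card {j\<in>{1..<Suc n}. ?L!j < ?L!(j-1)}" by (simp add: ldes_card del: upt_Suc)
  also have "\<dots> = card {i\<in>{0..<n}. ?L!(Suc i) < ?L!i}" using shift_card[of n "\<lambda>j. ?L!j < ?L!(j-1)"] by (simp del: upt_Suc)
  also have "{i\<in>{0..<n}. ?L!(Suc i) < ?L!i} = {i\<in>{0..n-1}. sval n w (Suc i) < sval n w i}"
  proof (rule Collect_cong)
    fix i show "(i \<in> {0..<n} \<and> ?L!(Suc i) < ?L!i) = (i \<in> {0..n-1} \<and> sval n w (Suc i) < sval n w i)"
      using sval_nth1[of i n w] sval_nth1[of "Suc i" n w] n by (cases "i < n") auto
  qed
  finally show ?thesis by (simp add: sdes_def)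
qed

lemma sades_list: "sades n w = ldes (0 # map (\<lambda>i. w (int i)) [1..<Suc n] @ [0])"
proof -
  let ?L = "0 # map (\<lambda>i. w (int i)) [1..<Suc n] @ [0]"
  have "ldes ?L = card {j\<in>{1..<Suc (Suc n)}. ?L!j < ?L!(j-1)}" by (simp add: ldes_card del: upt_Suc)
  also have "\<dots> = card {i\<in>{0..<Suc n}. ?L!(Suc i) < ?L!i}" using shift_card[of "Suc n" "\<lambda>j. ?L!j < ?L!(j-1)"] by (simp del: upt_Suc)
  also have "{i\<in>{0..<Suc n}. ?L!(Suc i) < ?L!i} = {i\<in>{0..n}. sval n w (Suc i) < sval n w i}"
  proof (rule Collect_cong)
    fix i show "(i \<in> {0..<Suc n} \<and> ?L!(Suc i) < ?L!i) = (i \<in> {0..n} \<and> sval n w (Suc i) < sval n w i)"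
      using sval_nth2[of i n w] sval_nth2[of "Suc i" n w] by (cases "i \<le> n") auto
  qed
  finally show ?thesis by (simp add: sades_def)
qed

lemma sb_inj:
  assumes wp: "w permutes S" and wp': "w' permutes S"
    and o: "\<forall>i. w (-i) = - w i" and o': "\<forall>i. w' (-i) = - w' i"
    and S: "S = {-int n..int n} - {0}"
    and e: "map (\<lambda>i. w (int i)) [1..<Suc n] = map (\<lambda>i. w' (int i)) [1..<Suc n]"
  shows "w = w'"
proof
  have all: "\<forall>x\<in>set [1..<Suc n]. w (int x) = w' (int x)" using e by (simp only: map_eq_conv)
  have pos: "w (int i) = w' (int i)" if "1 \<le> i" "i \<le> n" for i
  proof -
    have "i \<in> set [1..<Suc n]" using that by (simp del: upt_Suc)
    thus ?thesis using all by blast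
  qed
  fix i :: int
  show "w i = w' i"
  proof (cases "i \<in> S")
    case False thus ?thesis using permutes_not_in[OF wp] permutes_not_in[OF wp'] by simp
  next
    case True
    show ?thesis
    proof (cases "i > 0")
      case True
      hence "1 \<le> nat i" "nat i \<le> n" using \<open>i \<in> S\<close> S by auto
      hence "w (int (nat i)) = w' (int (nat i))" by (rule pos)
      thus ?thesis using True by simp
    next
      case False
      hence "1 \<le> nat (-i)" "nat (-i) \<le> n" using \<open>i \<in> S\<close> S by auto
      hence "w (int (nat (-i))) = w' (int (nat (-i)))" by (rule pos)
      hence "w (-i) = w' (-i)" using False by simp
      moreover have "w i = - w (-i)" using o[rule_format, of "-i"] by simp
      moreover have "w' i = - w' (-i)" using o'[rule_format, of "-i"] by simp
      ultimately show ?thesis by simp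
    qed
  qed
qed

lemma sb_into:
  assumes wp: "w permutes S" and o: "\<forall>i. w (-i) = - w i"
    and S: "S = {-int n..int n} - {0}"
  shows "map (\<lambda>i. w (int i)) [1..<Suc n] \<in> SC n"
proof -
  define l where "l = map (\<lambda>i. w (int i)) [1..<Suc n]"
  have inS: "w (int i) \<in> S" if "1 \<le> i" "i \<le> n" for i
  proof -
    have "int i \<in> S" using that S by auto
    thus ?thesis using permutes_in_image[OF wp] by simp
  qed
  have injabs: "inj_on (\<lambda>i. abs (w (int i))) {1..<Suc n}"
  proof (rule inj_onI)
    fix i j assume i: "i \<in> {1..<Suc n}" and j: "j \<in> {1..<Suc n}" and e: "abs (w (int i)) = abs (w (int j))"
    have "w (int i) = w (int j) \<or> w (int i) = - w (int j)" using e by (simp add: abs_eq_iff)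
    moreover have "- w (int j) = w (- int j)" using o by simp
    ultimately have "w (int i) = w (int j) \<or> w (int i) = w (- int j)" by simp
    hence "int i = int j \<or> int i = - int j"
    proof (elim disjE)
      assume "w (int i) = w (int j)"
      hence "int i = int j" by (rule injD[OF permutes_inj[OF wp]])
      thus ?thesis ..
    next
      assume "w (int i) = w (- int j)"
      hence "int i = - int j" by (rule injD[OF permutes_inj[OF wp]])
      thus ?thesis ..
    qed
    thus "i = j" using i j by auto
  qed
  have dist: "distinct (map abs l)"
  proof -
    have "map abs l = map (\<lambda>i. abs (w (int i))) [1..<Suc n]" by (simp add: l_def del: upt_Suc)
    thus ?thesis using injabs by (simp add: distinct_map del: upt_Suc)
  qed
  have sub: "abs ` set l \<subseteq> {1..int n}"
  proof
    fix a assume "a \<in> abs ` set l"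
    then obtain i where i: "1 \<le> i" "i \<le> n" "a = abs (w (int i))"
      by (auto simp: l_def simp del: upt_Suc)
    have "w (int i) \<in> S" by (rule inS[OF i(1,2)])
    thus "a \<in> {1..int n}" using i(3) S by auto
  qed
  have "card (abs ` set l) = n"
  proof -
    have "card (abs ` set l) = length (map abs l)" using distinct_card[OF dist] by simp
    thus ?thesis by (simp add: l_def del: upt_Suc)
  qed
  hence "abs ` set l = {1..int n}" using sub by (intro card_subset_eq) auto
  thus ?thesis using dist by (simp add: SC_def l_def)
qed

lemma sb_onto:
  assumes l: "l \<in> SC n" and S: "S = {-int n..int n} - {0}"
  shows "\<exists>w. w permutes S \<and> (\<forall>i. w (-i) = - w i) \<and> map (\<lambda>i. w (int i)) [1..<Suc n] = l"
proof -
  have ln: "length l = n" by (rule SC_length[OF l])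
  have dl: "distinct (map abs l)" "abs ` set l = {1..int n}" using l by (auto simp: SC_def)
  define w where "w i = (if i \<in> S then sgn i * l ! (nat (abs i) - 1) else i)" for i :: int
  have absl: "abs (l ! k) \<in> {1..int n}" if "k < n" for k
  proof -
    have "l ! k \<in> set l" using that ln by simp
    thus ?thesis using dl(2) by blast
  qed
  have idx: "nat (abs i) - 1 < n" if "i \<in> S" for i using that S by auto
  have wabs: "abs (w i) = abs (l ! (nat (abs i) - 1))" if "i \<in> S" for i
  proof -
    have "i \<noteq> 0" using that S by auto
    moreover have "w i = sgn i * l ! (nat (abs i) - 1)" using that by (simp add: w_def)
    ultimately show ?thesis by (simp add: abs_mult abs_sgn_eq)
  qed
  have winS: "w i \<in> S" if "i \<in> S" for i
  proof -
    have "abs (w i) \<in> {1..int n}" using wabs[OF that] absl[OF idx[OF that]] by simp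
    thus ?thesis unfolding S by (auto simp: abs_le_iff)
  qed
  have wval: "w i = sgn i * l ! (nat (abs i) - 1)" if "i \<in> S" for i
    using that unfolding w_def by (rule if_P)
  have inj: "inj_on w S"
  proof (rule inj_onI)
    fix i j assume i: "i \<in> S" and j: "j \<in> S" and e: "w i = w j"
    define a where "a = nat (abs i) - 1"
    define b where "b = nat (abs j) - 1"
    have ia: "a < length l" using idx[OF i] ln unfolding a_def by simp
    have jb: "b < length l" using idx[OF j] ln unfolding b_def by simp
    have "abs (l ! a) = abs (w i)" using wabs[OF i] unfolding a_def by (rule sym)
    also have "\<dots> = abs (w j)" using e by (rule arg_cong)
    also have "\<dots> = abs (l ! b)" using wabs[OF j] unfolding b_def .
    finally have "map abs l ! a = map abs l ! b" using ia jb by simp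
    hence ab: "a = b" using nth_eq_iff_index_eq[OF dl(1), of a b] ia jb by simp
    have i1: "1 \<le> nat (abs i)" "1 \<le> nat (abs j)" using i j S by auto
    have "nat (abs i) = nat (abs j)" using ab i1 unfolding a_def b_def by arith
    hence aij: "abs i = abs j" by simp
    have nz: "l ! a \<noteq> 0" using absl[OF idx[OF i]] unfolding a_def by auto
    have bb: "b = a" using ab by simp
    have "sgn i * l ! a = sgn j * l ! a"
      using e wval[OF i] wval[OF j] unfolding a_def[symmetric] b_def[symmetric] bb by simp
    hence sg: "sgn i = sgn j" using nz by simp
    have "i = sgn i * abs i" by (simp add: mult_sgn_abs)
    also have "\<dots> = sgn j * abs j" using sg aij by simp
    also have "\<dots> = j" by (simp add: mult_sgn_abs)
    finally show "i = j" .
  qed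
  have sub: "w ` S \<subseteq> S" using winS by blast
  have fS: "finite S" unfolding S by simp
  have "w ` S = S" by (rule endo_inj_surj[OF fS sub inj])
  hence "bij_betw w S S" using inj by (simp add: bij_betw_def)
  moreover have "\<And>x. x \<notin> S \<Longrightarrow> w x = x" by (simp add: w_def)
  ultimately have wp: "w permutes S" by (rule bij_imp_permutes)
  have odd: "\<forall>i. w (-i) = - w i"
  proof
    fix i
    have "(-i \<in> S) = (i \<in> S)" unfolding S by auto
    thus "w (-i) = - w i" by (simp add: w_def)
  qed
  have "map (\<lambda>i. w (int i)) [1..<Suc n] = l"
  proof (rule nth_equalityI)
    show "length (map (\<lambda>i. w (int i)) [1..<Suc n]) = length l" using ln by (simp del: upt_Suc)
    fix k assume "k < length (map (\<lambda>i. w (int i)) [1..<Suc n])"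
    hence k: "k < n" by (simp del: upt_Suc)
    have "int (Suc k) \<in> S" using k S by auto
    hence "w (int (Suc k)) = sgn (int (Suc k)) * l ! (nat (abs (int (Suc k))) - 1)" by (rule wval)
    moreover have "nat (abs (int (Suc k))) - 1 = k" by (simp only: abs_of_nat nat_int diff_Suc_1)
    moreover have "sgn (int (Suc k)) = 1" by simp
    ultimately have "w (int (Suc k)) = l ! k" by (simp only: mult_1)
    thus "map (\<lambda>i. w (int i)) [1..<Suc n] ! k = l ! k" using k by (simp del: upt_Suc)
  qed
  thus ?thesis using wp odd by blast
qed

lemma signed_bij:
  "bij_betw (\<lambda>w. map (\<lambda>i. w (int i)) [1..<Suc n]) (signed_perms n) (SC n)"
proof (rule bij_betw_imageI)
  define S where "S = {-int n..int n} - {0}"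
  have sp: "w \<in> signed_perms n \<longleftrightarrow> w permutes S \<and> (\<forall>i. w (-i) = - w i)" for w
    by (simp add: signed_perms_def S_def)
  show "inj_on (\<lambda>w. map (\<lambda>i. w (int i)) [1..<Suc n]) (signed_perms n)"
  proof (rule inj_onI)
    fix w w' assume "w \<in> signed_perms n" "w' \<in> signed_perms n"
      "map (\<lambda>i. w (int i)) [1..<Suc n] = map (\<lambda>i. w' (int i)) [1..<Suc n]"
    thus "w = w'" using sb_inj[OF _ _ _ _ S_def] sp by blast
  qed
  show "(\<lambda>w. map (\<lambda>i. w (int i)) [1..<Suc n]) ` signed_perms n = SC n"
  proof
    show "(\<lambda>w. map (\<lambda>i. w (int i)) [1..<Suc n]) ` signed_perms n \<subseteq> SC n"
      using sb_into[OF _ _ S_def] sp by blast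
    show "SC n \<subseteq> (\<lambda>w. map (\<lambda>i. w (int i)) [1..<Suc n]) ` signed_perms n"
    proof
      fix l assume "l \<in> SC n"
      then obtain w where "w permutes S" "\<forall>i. w (-i) = - w i" "map (\<lambda>i. w (int i)) [1..<Suc n] = l"
        using sb_onto[OF _ S_def] by blast
      thus "l \<in> (\<lambda>w. map (\<lambda>i. w (int i)) [1..<Suc n]) ` signed_perms n" using sp by force
    qed
  qed
qed

lemma typeC_list: "n \<ge> 1 \<Longrightarrow> typeC n y = (\<Sum>l\<in>SC n. y ^ ldes (0 # l))"
proof -
  assume n: "n \<ge> 1"
  have "typeC n y = (\<Sum>w\<in>signed_perms n. y ^ ldes (0 # map (\<lambda>i. w (int i)) [1..<Suc n]))"
    unfolding typeC_def using sdes_list[OF n] by simp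
  also have "\<dots> = (\<Sum>l\<in>SC n. y ^ ldes (0 # l))"
    by (rule sum.reindex_bij_betw[OF signed_bij, of "\<lambda>l. y ^ ldes (0 # l)"])
  finally show ?thesis .
qed

lemma typeCt_list: "typeCt n y = (\<Sum>l\<in>SC n. y ^ ldes (0 # l @ [0]))"
proof -
  have "typeCt n y = (\<Sum>w\<in>signed_perms n. y ^ ldes (0 # map (\<lambda>i. w (int i)) [1..<Suc n] @ [0]))"
    unfolding typeCt_def using sades_list by simp
  also have "\<dots> = (\<Sum>l\<in>SC n. y ^ ldes (0 # l @ [0]))"
    by (rule sum.reindex_bij_betw[OF signed_bij, of "\<lambda>l. y ^ ldes (0 # l @ [0])"])
  finally show ?thesis .
qed


unbundle fps_syntax



definition G1 :: "nat \<Rightarrow> real fps" where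
  "G1 n = Abs_fps (\<lambda>j. of_nat ((j + n) choose n))"

definition G2 :: "nat \<Rightarrow> real fps" where
  "G2 n = Abs_fps (\<lambda>j. if even j then of_nat ((j div 2 + n) choose n) else 0)"

lemma G1_step: "G1 (Suc n) * (1 - fps_X) = G1 n"
proof (rule fps_ext)
  fix j
  show "(G1 (Suc n) * (1 - fps_X)) $ j = G1 n $ j"
  proof (cases j)
    case 0 thus ?thesis by (simp add: G1_def right_diff_distrib)
  next
    case (Suc i)
    have a: "Suc i + Suc n = Suc (i + Suc n)" by simp
    have b: "Suc i + n = i + Suc n" by simp
    have e: "real ((Suc i + Suc n) choose Suc n) - real ((i + Suc n) choose Suc n) = real ((Suc i + n) choose n)"
      unfolding a b binomial_Suc_Suc by simp
    have "(G1 (Suc n) * (1 - fps_X)) $ j = real ((Suc i + Suc n) choose Suc n) - real ((i + Suc n) choose Suc n)"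
      using Suc by (simp add: G1_def right_diff_distrib del: binomial_Suc_Suc)
    also have "\<dots> = G1 n $ j" using Suc e by (simp add: G1_def del: binomial_Suc_Suc)
    finally show ?thesis .
  qed
qed

lemma G1_0: "G1 0 * (1 - fps_X) = 1"
proof (rule fps_ext)
  fix j show "(G1 0 * (1 - fps_X)) $ j = 1 $ j" by (cases j) (simp_all add: G1_def right_diff_distrib)
qed

lemma G1_inv: "G1 n * (1 - fps_X) ^ Suc n = 1"
proof (induction n)
  case 0 thus ?case using G1_0 by simp
next
  case (Suc n)
  have "G1 (Suc n) * (1 - fps_X) ^ Suc (Suc n) = (G1 (Suc n) * (1 - fps_X)) * (1 - fps_X) ^ Suc n"
    by (simp only: power_Suc[of "1 - fps_X" "Suc n"] mult.assoc)
  also have "\<dots> = G1 n * (1 - fps_X) ^ Suc n" by (simp only: G1_step)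
  also have "\<dots> = 1" by (rule Suc.IH)
  finally show ?case .
qed

lemma pascal_real: "real ((Suc i + Suc n) choose Suc n) - real ((i + Suc n) choose Suc n) = real ((Suc i + n) choose n)"
proof -
  have a: "Suc i + Suc n = Suc (i + Suc n)" by simp
  have b: "Suc i + n = i + Suc n" by simp
  show ?thesis unfolding a b binomial_Suc_Suc by simp
qed

lemma G2_step: "G2 (Suc n) * (1 - fps_X^2) = G2 n"
proof (rule fps_ext)
  fix j
  have c: "(G2 (Suc n) * (1 - fps_X^2)) $ j = G2 (Suc n) $ j - (if j < 2 then 0 else G2 (Suc n) $ (j - 2))"
    by (simp add: right_diff_distrib fps_X_power_mult_right_nth del: binomial_Suc_Suc)
  show "(G2 (Suc n) * (1 - fps_X^2)) $ j = G2 n $ j"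
  proof (cases "j < 2")
    case True thus ?thesis unfolding c by (cases j) (auto simp: G2_def)
  next
    case False
    then obtain i where i: "j = Suc (Suc i)" by (metis add_2_eq_Suc le_Suc_ex not_less)
    show ?thesis
    proof (cases "even j")
      case True
      hence ev: "even i" using i by simp
      have d: "j div 2 = Suc (i div 2)" using i by simp
      show ?thesis unfolding c using True ev False i d pascal_real[of "i div 2" n]
        by (simp add: G2_def del: binomial_Suc_Suc)
    next
      case False
      thus ?thesis unfolding c using i by (simp add: G2_def del: binomial_Suc_Suc)
    qed
  qed
qed

lemma G2_0: "G2 0 * (1 - fps_X^2) = 1"
proof (rule fps_ext)
  fix j show "(G2 0 * (1 - fps_X^2)) $ j = 1 $ j"
    by (cases "j < 2") (auto simp: G2_def right_diff_distrib fps_X_power_mult_right_nth del: binomial_Suc_Suc)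
qed

lemma G2_inv: "G2 n * (1 - fps_X^2) ^ Suc n = 1"
proof (induction n)
  case 0 thus ?case using G2_0 by simp
next
  case (Suc n)
  have "G2 (Suc n) * (1 - fps_X^2) ^ Suc (Suc n) = (G2 (Suc n) * (1 - fps_X^2)) * (1 - fps_X^2) ^ Suc n"
    by (simp only: power_Suc[of "1 - fps_X^2" "Suc n"] mult.assoc)
  also have "\<dots> = G2 n * (1 - fps_X^2) ^ Suc n" by (simp only: G2_step)
  also have "\<dots> = 1" by (rule Suc.IH)
  finally show ?case .
qed

lemma XG1: "(fps_X ^ d * G1 n) $ m = of_nat (wb n m d)"
  by (simp add: fps_X_power_mult_nth G1_def wb_def)

lemma XG2_odd: "(fps_X ^ (2*d+1) * G2 n) $ m = (if odd m then of_nat (wb n (m div 2) d) else 0)"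
proof (cases "odd m")
  case True
  then obtain q where q: "m = 2*q+1" by (metis oddE)
  show ?thesis
  proof (cases "d \<le> q")
    case True
    have "m - (2*d+1) = 2*(q-d)" using q True by simp
    thus ?thesis using q True by (simp only: fps_X_power_mult_nth) (simp add: G2_def wb_def)
  qed (use q in \<open>simp only: fps_X_power_mult_nth, simp add: G2_def wb_def\<close>)
next
  case False
  thus ?thesis by (simp only: fps_X_power_mult_nth) (auto simp add: G2_def)
qed

lemma XG2_even: "(fps_X ^ (2*d) * G2 n) $ m = (if even m then of_nat (wb n (m div 2) d) else 0)"
proof (cases "even m")
  case True
  then obtain q where q: "m = 2*q" by (metis evenE)
  show ?thesis
  proof (cases "d \<le> q")
    case True
    have "m - 2*d = 2*(q-d)" using q True by simp
    thus ?thesis using q True by (simp only: fps_X_power_mult_nth) (simp add: G2_def wb_def)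
  qed (use q in \<open>simp only: fps_X_power_mult_nth, simp add: G2_def wb_def\<close>)
next
  case False
  thus ?thesis by (simp only: fps_X_power_mult_nth) (auto simp add: G2_def)
qed

lemma poly_main:
  fixes A :: "'a set" and S :: "'b set" and da :: "'a \<Rightarrow> nat" and dc de :: "'b \<Rightarrow> nat" and x :: real
  assumes fin: "finite A" "finite S" and n: "n \<ge> 1"
    and wa: "\<And>m. (\<Sum>l\<in>A. wb n m (da l)) = (m+1)^n"
    and wc: "\<And>m. (\<Sum>l\<in>S. wb n m (dc l)) = (2*m+1)^n"
    and we: "\<And>m. (\<Sum>l\<in>S. wb n m (de l)) = (2*m)^n"
  shows "(\<Sum>l\<in>S. x^(2*dc l+1) + x^(2*de l)) = x * (1+x)^(n+1) * (\<Sum>l\<in>A. x^(da l))"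
proof -
  define Pa :: "real poly" where "Pa = (\<Sum>l\<in>A. monom 1 (da l))"
  define Pt :: "real poly" where "Pt = (\<Sum>l\<in>S. monom 1 (2*dc l+1) + monom 1 (2*de l))"
  define F :: "real fps" where "F = Abs_fps (\<lambda>m. real ((m+1)^n))"
  define H :: "real fps" where "H = Abs_fps (\<lambda>m. real (m^n))"
  have h1: "fps_of_poly Pa * G1 n = F"
  proof (rule fps_ext)
    fix m
    have "(fps_of_poly Pa * G1 n) $ m = (\<Sum>l\<in>A. (fps_X ^ da l * G1 n) $ m)"
      by (simp add: Pa_def fps_of_poly_sum fps_of_poly_monom' sum_distrib_right fps_sum_nth)
    also have "\<dots> = real (\<Sum>l\<in>A. wb n m (da l))" by (simp add: XG1)
    also have "\<dots> = F $ m" by (simp add: wa F_def)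
    finally show "(fps_of_poly Pa * G1 n) $ m = F $ m" .
  qed
  have h2: "fps_of_poly Pt * G2 n = H"
  proof (rule fps_ext)
    fix m
    have "(fps_of_poly Pt * G2 n) $ m = (\<Sum>l\<in>S. (fps_X ^ (2*dc l+1) * G2 n) $ m + (fps_X ^ (2*de l) * G2 n) $ m)"
      by (simp add: Pt_def fps_of_poly_sum fps_of_poly_add fps_of_poly_monom' sum_distrib_right fps_sum_nth distrib_right)
    also have "\<dots> = (if odd m then real (\<Sum>l\<in>S. wb n (m div 2) (dc l)) else real (\<Sum>l\<in>S. wb n (m div 2) (de l)))"
      by (simp only: XG2_odd XG2_even) (cases "odd m"; simp)
    also have "\<dots> = H $ m"
    proof (cases "odd m")
      case True
      hence "2 * (m div 2) + 1 = m" by simp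
      thus ?thesis using True by (simp add: wc H_def)
    next
      case False
      hence "2 * (m div 2) = m" by simp
      thus ?thesis using False by (simp add: we H_def)
    qed
    finally show "(fps_of_poly Pt * G2 n) $ m = H $ m" .
  qed
  have h3: "H = fps_X * F"
  proof (rule fps_ext)
    fix m show "H $ m = (fps_X * F) $ m" using n by (cases m) (simp_all add: H_def F_def)
  qed
  have fa: "fps_of_poly Pa = F * (1 - fps_X) ^ Suc n"
  proof -
    have "fps_of_poly Pa = fps_of_poly Pa * (G1 n * (1 - fps_X) ^ Suc n)" by (simp only: G1_inv mult_1_right)
    also have "\<dots> = F * (1 - fps_X) ^ Suc n" by (simp only: mult.assoc[symmetric] h1)
    finally show ?thesis .
  qed
  have ft: "fps_of_poly Pt = H * (1 - fps_X^2) ^ Suc n"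
  proof -
    have "fps_of_poly Pt = fps_of_poly Pt * (G2 n * (1 - fps_X^2) ^ Suc n)" by (simp only: G2_inv mult_1_right)
    also have "\<dots> = H * (1 - fps_X^2) ^ Suc n" by (simp only: mult.assoc[symmetric] h2)
    finally show ?thesis .
  qed
  have "fps_of_poly Pt = fps_of_poly ([:0,1:] * [:1,1:] ^ Suc n * Pa)"
  proof -
    have p11: "fps_of_poly [:1,1::real:] = 1 + fps_X" using fps_of_poly_linear'[of "1::real"] by simp
    have q: "(1 - fps_X^2 :: real fps) = (1 + fps_X) * (1 - fps_X)" by (simp add: algebra_simps power2_eq_square)
    have "fps_of_poly ([:0,1:] * [:1,1:] ^ Suc n * Pa) = fps_X * (1 + fps_X) ^ Suc n * (F * (1 - fps_X) ^ Suc n)"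
      by (simp only: fps_of_poly_mult fps_of_poly_power fa p11 fps_of_poly_fps_X)
    also have "\<dots> = fps_X * F * ((1 + fps_X) * (1 - fps_X)) ^ Suc n"
      by (simp only: power_mult_distrib mult_ac)
    also have "\<dots> = fps_of_poly Pt" unfolding ft h3 q ..
    finally show ?thesis ..
  qed
  hence "Pt = [:0,1:] * [:1,1:] ^ Suc n * Pa" by (simp only: fps_of_poly_eq_iff)
  hence "poly Pt x = poly ([:0,1:] * [:1,1:] ^ Suc n * Pa) x" by simp
  thus ?thesis by (simp add: Pt_def Pa_def poly_sum poly_monom algebra_simps)
qed


theorem mainTheorem3:
  fixes n :: nat and x :: real
  assumes "n \<ge> 1" and "x \<noteq> 0"
  shows "Tpoly n x = (1 + x) ^ (n + 1) * eulerA n x"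
proof -
  have fa: "finite (PA n)" by (simp add: PA_def)
  have key: "(\<Sum>l\<in>SC n. x^(2*ldes (0#l)+1) + x^(2*ldes (0#l@[0]))) = x * (1+x)^(n+1) * (\<Sum>l\<in>PA n. x^(ldes l))"
    by (rule poly_main[where da=ldes and dc = "\<lambda>l. ldes (0#l)" and de = "\<lambda>l. ldes (0#l@[0])",
          OF fa finite_SC assms(1) WA WC WCt])
  have "x * Tpoly n x = x * typeC n (x^2) + typeCt n (x^2)"
    using assms(2) by (simp add: Tpoly_def algebra_simps)
  also have "\<dots> = (\<Sum>l\<in>SC n. x^(2*ldes (0#l)+1) + x^(2*ldes (0#l@[0])))"
    by (simp add: typeC_list[OF assms(1)] typeCt_list sum.distrib sum_distrib_left power_mult)
  also have "\<dots> = x * ((1 + x) ^ (n + 1) * eulerA n x)"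
    by (simp only: key eulerA_list mult.assoc)
  finally show ?thesis using assms(2) by simp
qed

end
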